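(* Let $m,k\in\mathbb{N}$, let $\beta,\gamma,\mu\in\mathbb{C}$ with $\beta-k-1,\ \beta-\gamma-m-k\notin\mathbb{Z}_0^-$, $\Re(-m-k-\gamma)>0$ and $\Re(\mu)>0$. Then \[ \int_0^\infty t^{-m-k-\gamma-1}e^{-\mu t}\,{}_2F_2\left[\begin{array}{r} -m,\ \beta-k-1;\\ -m-k,\ \beta-\gamma-m-k;\end{array}\mu t\right]_m dt=\frac{\Gamma(-m-k-\gamma)}{\mu^{-m-k-\gamma}}\frac{\left(\beta\right)_m\left(\gamma\right)_m}{\left(1+k\right)_m\left(1+k+\gamma-\beta\right)_m}. \]
   Context: $\mathbb{N}=\{1,2,3,\dots\}$, $\mathbb{Z}_0^-=\{0,-1,-2,\dots\}$. For $a\in\mathbb{C}$ and $n\in\mathbb{N}_0$, $(a)_0=1$ and $(a)_n=a(a+1)\cdots(a+n-1)$. For $N\in\mathbb{N}_0$, the truncated series is ${}_2F_2\left[\begin{array}{r} a_1,a_2;\\ b_1,b_2;\end{array}z\right]_N=\sum_{n=0}^{N}\frac{(a_1)_n(a_2)_n}{(b_1)_n(b_2)_n}\frac{z^n}{n!}$ (first $N+1$ terms). The left side is the Mellin transform $\int_0^\infty t^{s-1}f(t)\,dt$ at $s=-m-k-\gamma$; $\mu^{s}$ denotes the principal power. *)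

theory Defs
  imports "HOL-Analysis.Analysis"
begin

definition hyp2F2_trunc :: "complex \<Rightarrow> complex \<Rightarrow> complex \<Rightarrow> complex \<Rightarrow> complex \<Rightarrow> nat \<Rightarrow> complex" where
  "hyp2F2_trunc a1 a2 b1 b2 z N =
     (\<Sum>n\<le>N. (pochhammer a1 n * pochhammer a2 n) / (pochhammer b1 n * pochhammer b2 n)
              * z ^ n / of_nat (fact n))"

end

theory Submission imports Defs begin


lemma poly_id:
  fixes a b c e K N :: complex
  assumes "e = c - a - b"
  shows "(c+K)*(K+1)*(N-K-e) - (c-a+K)*(c-b+K)*(N-K-1) = -(a+N)*(b+N)*(N-K-1) + N*(c+N-1)*(N-K-e)"
  unfolding assms by (simp add: algebra_simps)

lemma wz_alg:
  fixes a b c e K N Pm1 Pm Qe Q1 pa pb pc f :: complex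
  assumes e: "e = c - a - b"
    and F1: "Pm1 * (N - K - 1) = - (K + 1) * Pm"
    and F2: "Qe * (N - K - e) = (- K - e) * Q1"
    and nz: "pc \<noteq> 0" "Q1 \<noteq> 0" "f \<noteq> 0" "c + N \<noteq> 0" "K + e \<noteq> 0" "N + 1 \<noteq> 0"
            "N - K - 1 \<noteq> 0" "N - K - e \<noteq> 0" "K + 1 \<noteq> 0"
  shows "(c + K) * (e + K) * (Pm1 * pa * pb / (pc * Qe * f))
         - (c - a + K) * (c - b + K) * (Pm * pa * pb / (pc * Q1 * f))
       = (- (K + e) / (K + 1)) * ((N + 1) * (c + N) *
            ((- (K + 1)) * Pm * (pa * (a + N)) * (pb * (b + N)) / ((pc * (c + N)) * ((- K - e) * Q1) * ((N + 1) * f)))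
          - N * (c + N - 1) * (Pm1 * pa * pb / (pc * Qe * f)))"
proof -
  define W where "W = Pm * pa * pb / (pc * Q1 * f)"
  have ke: "- K - e \<noteq> 0" using nz(5) by (metis add_uminus_conv_diff minus_add_distrib neg_equal_0_iff_equal)
  have Qe: "Qe \<noteq> 0" using F2 nz ke by auto
  have A: "Pm1 * pa * pb / (pc * Qe * f) = W * ((K+1)*(N-K-e)/((N-K-1)*(K+e)))"
  proof -
    have "W * ((K+1)*(N-K-e)/((N-K-1)*(K+e))) = (Pm * pa * pb * (K+1)*(N-K-e)) / (pc * Q1 * f * (N-K-1)*(K+e))"
      unfolding W_def by (simp add: mult.assoc)
    also have "\<dots> = Pm1 * pa * pb / (pc * Qe * f)"
    proof (subst frac_eq_eq)
      show "pc * Q1 * f * (N - K - 1) * (K + e) \<noteq> 0" using nz by simp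
      show "pc * Qe * f \<noteq> 0" using nz Qe by simp
      have "Pm * pa * pb * (K + 1) * (N - K - e) * (pc * Qe * f) = Pm * pa * pb * (K + 1) * pc * f * (Qe * (N - K - e))"
        by (simp add: algebra_simps)
      also have "\<dots> = Pm * pa * pb * (K + 1) * pc * f * ((- K - e) * Q1)" by (simp add: F2)
      also have "\<dots> = pa * pb * pc * Q1 * f * (K+e) * (- (K + 1) * Pm)" by (simp add: algebra_simps)
      also have "\<dots> = pa * pb * pc * Q1 * f * (K+e) * (Pm1 * (N - K - 1))" by (simp add: F1)
      also have "\<dots> = Pm1 * pa * pb * (pc * Q1 * f * (N - K - 1) * (K + e))" by (simp add: algebra_simps)
      finally show "Pm * pa * pb * (K + 1) * (N - K - e) * (pc * Qe * f) = Pm1 * pa * pb * (pc * Q1 * f * (N - K - 1) * (K + e))" .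
    qed
    finally show ?thesis by simp
  qed
  have C: "(- (K + 1)) * Pm * (pa * (a + N)) * (pb * (b + N)) / ((pc * (c + N)) * ((- K - e) * Q1) * ((N + 1) * f))
      = W * ((K+1)*(a+N)*(b+N)/((c+N)*(K+e)*(N+1)))"
  proof -
    have "W * ((K+1)*(a+N)*(b+N)/((c+N)*(K+e)*(N+1))) = (Pm * pa * pb * ((K+1)*(a+N)*(b+N))) / (pc * Q1 * f * ((c+N)*(K+e)*(N+1)))"
      unfolding W_def by (simp add: mult.assoc)
    also have "\<dots> = (- (K + 1)) * Pm * (pa * (a + N)) * (pb * (b + N)) / ((pc * (c + N)) * ((- K - e) * Q1) * ((N + 1) * f))"
      apply (subst frac_eq_eq)
      using nz ke apply simp_all
      apply (simp add: algebra_simps)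
      done
    finally show ?thesis by simp
  qed
  have S: "(c + K) * (e + K) * ((K+1)*(N-K-e)/((N-K-1)*(K+e))) - (c - a + K) * (c - b + K)
      = (- (K + e) / (K + 1)) * ((N + 1) * (c + N) * ((K+1)*(a+N)*(b+N)/((c+N)*(K+e)*(N+1)))
          - N * (c + N - 1) * ((K+1)*(N-K-e)/((N-K-1)*(K+e))))"
  proof -
    define D where "D = N - K - 1"
    have D: "D \<noteq> 0" using nz unfolding D_def by simp
    have l: "(c + K) * (e + K) * ((K+1)*(N-K-e)/(D*(K+e))) = (c+K)*(K+1)*(N-K-e)/D"
      using nz D by (simp add: add.commute[of e K])
    have r1: "(- (K + e) / (K + 1)) * ((N + 1) * (c + N) * ((K+1)*(a+N)*(b+N)/((c+N)*(K+e)*(N+1)))) = -(a+N)*(b+N)"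
      using nz by (simp add: divide_simps) (simp add: algebra_simps)
    have r2: "(- (K + e) / (K + 1)) * (N * (c + N - 1) * ((K+1)*(N-K-e)/(D*(K+e)))) = - N*(c+N-1)*(N-K-e)/D"
      using nz D by (simp add: divide_simps) (simp add: algebra_simps)
    have p: "(c+K)*(K+1)*(N-K-e) - (c-a+K)*(c-b+K)*D = -(a+N)*(b+N)*D + N*(c+N-1)*(N-K-e)"
      using poly_id[OF e, of K N] unfolding D_def .
    have "(c+K)*(K+1)*(N-K-e)/D - (c - a + K) * (c - b + K) = -(a+N)*(b+N) + N*(c+N-1)*(N-K-e)/D"
      using p D by (simp add: divide_simps)
    moreover have "(- (K + e) / (K + 1)) * ((N + 1) * (c + N) * ((K+1)*(a+N)*(b+N)/((c+N)*(K+e)*(N+1)))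
          - N * (c + N - 1) * ((K+1)*(N-K-e)/(D*(K+e)))) = -(a+N)*(b+N) + N*(c+N-1)*(N-K-e)/D"
      unfolding right_diff_distrib[of "- (K + e) / (K + 1)"] r1 r2 by simp
    ultimately show ?thesis unfolding D_def[symmetric] l by simp
  qed
  show ?thesis unfolding A C W_def[symmetric]
    using arg_cong[OF S, of "\<lambda>x. W * x"] by (simp add: algebra_simps)
qed

lemma poch_nz:
  fixes x :: complex
  assumes "\<And>j. j < n \<Longrightarrow> x + of_nat j \<noteq> 0"
  shows "pochhammer x n \<noteq> 0"
proof
  assume "pochhammer x n = 0"
  then obtain k where "k < n" "x = - of_nat k" by (auto simp: pochhammer_eq_0_iff)
  with assms[of k] show False by simp
qed

lemma pshift:
  fixes x :: complex
  shows "pochhammer x n * (x + of_nat n) = x * pochhammer (x + 1) n"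
  using pochhammer_Suc[of x n] pochhammer_rec[of x n] by simp

definition tt :: "complex \<Rightarrow> complex \<Rightarrow> complex \<Rightarrow> complex \<Rightarrow> nat \<Rightarrow> nat \<Rightarrow> complex" where
  "tt a b c e m n = pochhammer (- of_nat m) n * pochhammer a n * pochhammer b n /
     (pochhammer c n * pochhammer (1 - of_nat m - e) n * fact n)"

lemma tt_step:
  fixes a b c e :: complex and M m n :: nat
  assumes e: "e = c - a - b" and hc: "\<And>j. j < M \<Longrightarrow> c + of_nat j \<noteq> 0"
    and he: "\<And>j. j < M \<Longrightarrow> e + of_nat j \<noteq> 0" and mM: "Suc m \<le> M" and nm: "n \<le> Suc m"
  defines "G \<equiv> \<lambda>n. (- (of_nat m + e) / (of_nat m + 1)) * (of_nat n * (c + of_nat n - 1) * tt a b c e (Suc m) n)"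
  shows "(c + of_nat m) * (e + of_nat m) * tt a b c e (Suc m) n
         - (c - a + of_nat m) * (c - b + of_nat m) * tt a b c e m n = G (Suc n) - G n"
proof (cases "n = Suc m")
  case True
  have z1: "tt a b c e m n = 0" unfolding tt_def True
    by (simp add: pochhammer_of_nat_eq_0_lemma)
  have z2: "tt a b c e (Suc m) (Suc n) = 0" unfolding tt_def True
    by (subst pochhammer_of_nat_eq_0_lemma) simp_all
  have GS0: "G (Suc n) = 0" unfolding G_def z2 by simp
  have Gn: "G n = - (of_nat m + e) * (c + of_nat m) * tt a b c e (Suc m) n"
  proof -
    have m1: "(of_nat m + 1 :: complex) \<noteq> 0" by (metis of_nat_Suc of_nat_eq_0_iff add.commute nat.distinct(1))
    have "G n = (- (of_nat m + e) / (of_nat m + 1)) * (of_nat m + 1) * ((c + of_nat m) * tt a b c e (Suc m) n)"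
    proof -
      have h: "of_nat (Suc m) * (c + of_nat (Suc m) - 1) * X = (of_nat m + 1) * ((c + of_nat m) * X)" for X :: complex
        by (simp add: algebra_simps)
      show ?thesis unfolding G_def True h by (simp only: mult.assoc)
    qed
    also have "(- (of_nat m + e) / (of_nat m + 1)) * (of_nat m + 1) = - (of_nat m + e)" using m1 by simp
    finally show ?thesis by (simp add: algebra_simps)
  qed
  show ?thesis unfolding GS0 Gn z1 by (simp add: algebra_simps)
next
  case False
  with nm have nm': "n \<le> m" by simp
  define K :: complex where "K = of_nat m"
  define N :: complex where "N = of_nat n"
  have F1: "pochhammer (- of_nat (Suc m)) n * (N - K - 1) = - (K + 1) * pochhammer (- of_nat m) n"
    using pshift[of "- of_nat (Suc m)" n] unfolding K_def N_def by (simp add: algebra_simps)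
  have F2: "pochhammer (- K - e) n * (N - K - e) = (- K - e) * pochhammer (1 - K - e) n"
    using pshift[of "- K - e" n] unfolding N_def by (simp add: algebra_simps)
  have pc: "pochhammer c n \<noteq> 0" by (rule poch_nz) (use hc nm' mM in auto)
  have q1: "pochhammer (1 - K - e) n \<noteq> 0"
  proof (rule poch_nz)
    fix j assume j: "j < n"
    have "e + of_nat (m - 1 - j) \<noteq> 0" using he[of "m - 1 - j"] mM by simp
    moreover have "of_nat (m - 1 - j) = K - 1 - (of_nat j :: complex)" unfolding K_def using j nm' by (simp add: of_nat_diff)
    ultimately show "1 - K - e + of_nat j \<noteq> 0" by (metis add_diff_cancel_left' add_diff_eq diff_diff_eq2 diff_zero eq_diff_eq)
  qed
  have cN: "c + N \<noteq> 0" unfolding N_def using hc[of n] nm' mM by simp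
  have Ke: "K + e \<noteq> 0" unfolding K_def using he[of m] mM by (simp add: add.commute)
  have N1: "N + 1 \<noteq> 0" unfolding N_def by (metis of_nat_Suc of_nat_eq_0_iff add.commute nat.distinct(1))
  have NK1: "N - K - 1 \<noteq> 0" unfolding N_def K_def using nm' by (metis diff_diff_eq2 of_nat_1 of_nat_add eq_iff_diff_eq_0 of_nat_eq_iff le_imp_less_Suc less_not_refl2 Suc_eq_plus1_left add.commute)
  have NKe: "N - K - e \<noteq> 0"
  proof
    assume "N - K - e = 0"
    hence "e + of_nat (m - n) = 0" unfolding N_def K_def using nm' by (simp add: of_nat_diff algebra_simps)
    thus False using he[of "m - n"] mM by simp
  qed
  have K1: "K + 1 \<noteq> 0" unfolding K_def by (metis of_nat_Suc of_nat_eq_0_iff add.commute nat.distinct(1))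
  have fn: "(fact n :: complex) \<noteq> 0" by simp
  note W = wz_alg[OF e F1 F2 pc q1 fn cN Ke N1 NK1 NKe K1, of "pochhammer a n" "pochhammer b n"]
  have A: "tt a b c e (Suc m) n = pochhammer (- of_nat (Suc m)) n * pochhammer a n * pochhammer b n /
       (pochhammer c n * pochhammer (- K - e) n * fact n)"
    unfolding tt_def K_def by (simp add: algebra_simps)
  have B: "tt a b c e m n = pochhammer (- of_nat m) n * pochhammer a n * pochhammer b n /
       (pochhammer c n * pochhammer (1 - K - e) n * fact n)"
    unfolding tt_def K_def by simp
  have C: "tt a b c e (Suc m) (Suc n) = (- (K + 1)) * pochhammer (- of_nat m) n * (pochhammer a n * (a + N)) * (pochhammer b n * (b + N))
      / ((pochhammer c n * (c + N)) * ((- K - e) * pochhammer (1 - K - e) n) * ((N + 1) * fact n))"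
  proof -
    have 1: "pochhammer (- of_nat (Suc m)) (Suc n) = (- (K + 1)) * pochhammer (- of_nat m) n"
      unfolding pochhammer_rec K_def by simp
    have 2: "pochhammer (1 - of_nat (Suc m) - e) (Suc n) = (- K - e) * pochhammer (1 - K - e) n"
      unfolding pochhammer_rec K_def by (simp add: algebra_simps)
    have 3: "pochhammer a (Suc n) = pochhammer a n * (a + N)" "pochhammer b (Suc n) = pochhammer b n * (b + N)"
       "pochhammer c (Suc n) = pochhammer c n * (c + N)" unfolding N_def by (simp_all add: pochhammer_Suc)
    have 4: "(fact (Suc n) :: complex) = (N+1) * fact n" unfolding N_def by (simp add: add.commute)
    show ?thesis unfolding tt_def 1 2 3 4 ..
  qed
  have GS: "G (Suc n) = (- (K + e) / (K + 1)) * ((N + 1) * (c + N) * tt a b c e (Suc m) (Suc n))"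
    unfolding G_def K_def N_def by (simp add: algebra_simps)
  have G0: "G n = (- (K + e) / (K + 1)) * (N * (c + N - 1) * tt a b c e (Suc m) n)"
    unfolding G_def K_def N_def by (simp add: algebra_simps)
  show ?thesis unfolding GS G0 right_diff_distrib[of "- (K + e) / (K + 1)", symmetric] unfolding A B C using W unfolding K_def N_def .
qed

lemma saal:
  fixes a b c e :: complex and M m :: nat
  assumes e: "e = c - a - b" and hc: "\<And>j. j < M \<Longrightarrow> c + of_nat j \<noteq> 0"
    and he: "\<And>j. j < M \<Longrightarrow> e + of_nat j \<noteq> 0"
  shows "m \<le> M \<Longrightarrow> (\<Sum>n\<le>m. tt a b c e m n) =
     pochhammer (c - a) m * pochhammer (c - b) m / (pochhammer c m * pochhammer e m)"
proof (induction m)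
  case 0
  then show ?case by (simp add: tt_def)
next
  case (Suc m)
  define G where "G = (\<lambda>n. (- (of_nat m + e) / (of_nat m + 1)) * (of_nat n * (c + of_nat n - 1) * tt a b c e (Suc m) n))"
  have IH: "(\<Sum>n\<le>m. tt a b c e m n) =
     pochhammer (c - a) m * pochhammer (c - b) m / (pochhammer c m * pochhammer e m)"
    using Suc by simp
  have step: "\<And>n. n \<in> {..<Suc (Suc m)} \<Longrightarrow> (c + of_nat m) * (e + of_nat m) * tt a b c e (Suc m) n
         - (c - a + of_nat m) * (c - b + of_nat m) * tt a b c e m n = G (Suc n) - G n"
    unfolding G_def by (rule tt_step[OF e hc he Suc.prems]) auto
  have "(\<Sum>n<Suc (Suc m). (c + of_nat m) * (e + of_nat m) * tt a b c e (Suc m) n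
         - (c - a + of_nat m) * (c - b + of_nat m) * tt a b c e m n) = (\<Sum>n<Suc (Suc m). G (Suc n) - G n)"
    by (rule sum.cong) (use step in auto)
  also have "\<dots> = G (Suc (Suc m)) - G 0" by (rule sum_lessThan_telescope)
  also have "G (Suc (Suc m)) = 0" unfolding G_def tt_def by (subst pochhammer_of_nat_eq_0_lemma) simp_all
  also have "G 0 = 0" unfolding G_def by simp
  finally have "(c + of_nat m) * (e + of_nat m) * (\<Sum>n<Suc (Suc m). tt a b c e (Suc m) n)
      = (c - a + of_nat m) * (c - b + of_nat m) * (\<Sum>n<Suc (Suc m). tt a b c e m n)"
    by (simp add: sum_subtractf sum_distrib_left del: sum.lessThan_Suc)
  also have "(\<Sum>n<Suc (Suc m). tt a b c e m n) = (\<Sum>n\<le>m. tt a b c e m n)"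
  proof -
    have "tt a b c e m (Suc m) = 0" unfolding tt_def by (simp add: pochhammer_of_nat_eq_0_lemma)
    thus ?thesis by (simp add: lessThan_Suc_atMost)
  qed
  finally have rec: "(c + of_nat m) * (e + of_nat m) * (\<Sum>n\<le>Suc m. tt a b c e (Suc m) n)
      = (c - a + of_nat m) * (c - b + of_nat m) * (\<Sum>n\<le>m. tt a b c e m n)"
    by (simp add: lessThan_Suc_atMost)
  have nz1: "c + of_nat m \<noteq> 0" "e + of_nat m \<noteq> 0" using hc he Suc.prems by auto
  have nz2: "pochhammer c m \<noteq> 0" "pochhammer e m \<noteq> 0"
    by (rule poch_nz; use hc he Suc.prems in auto)+
  define S where "S = (\<Sum>n\<le>Suc m. tt a b c e (Suc m) n)"
  define R where "R = pochhammer (c - a) m * pochhammer (c - b) m / (pochhammer c m * pochhammer e m)"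
  have "(c + of_nat m) * (e + of_nat m) * S = (c - a + of_nat m) * (c - b + of_nat m) * R"
    using rec unfolding S_def R_def IH .
  hence "S = (c - a + of_nat m) * (c - b + of_nat m) * R / ((c + of_nat m) * (e + of_nat m))"
    using nz1 by (simp add: eq_divide_eq mult.commute)
  also have "\<dots> = pochhammer (c - a) (Suc m) * pochhammer (c - b) (Suc m) / (pochhammer c (Suc m) * pochhammer e (Suc m))"
    unfolding R_def pochhammer_Suc by (simp add: mult_ac)
  finally show ?case unfolding S_def .
qed



lemma scale_integral:
  fixes f :: "real \<Rightarrow> complex" and c :: real
  assumes f: "f absolutely_integrable_on {0<..}" and c: "c > 0"
  shows "((\<lambda>x. f (c * x)) has_integral (integral {0<..} f / of_real c)) {0<..}"
proof -
  let ?g = "\<lambda>x. indicator {0<..} x *\<^sub>R f x"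
  have ig: "integrable lebesgue ?g" using f unfolding set_integrable_def .
  have eqind: "\<And>x. indicator {0<..} (c*x) *\<^sub>R f (c*x) = indicator {0<..} x *\<^sub>R f (c*x)"
    using c by (auto simp: indicator_def zero_less_mult_iff)
  have "integrable lebesgue (\<lambda>x. ?g (0 + c * x))"
    by (rule lebesgue_integrable_real_affine[OF ig]) (use c in simp)
  hence si: "set_integrable lebesgue {0<..} (\<lambda>x. f (c*x))"
    unfolding set_integrable_def using eqind by simp
  have eqf: "(\<lambda>x. ?g (0 + c * x)) = (\<lambda>x. indicator {0<..} x *\<^sub>R f (c*x))"
    using eqind by auto
  have "(\<integral>x. ?g x \<partial>lebesgue) = \<bar>c\<bar> *\<^sub>R (\<integral>x. ?g (0 + c*x) \<partial>lebesgue)"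
    by (rule lebesgue_integral_real_affine) (use c in simp)
  hence "(LINT x:{0<..}|lebesgue. f x) = of_real c * (LINT x:{0<..}|lebesgue. f (c*x))"
    unfolding eqf set_lebesgue_integral_def using c by (simp add: scaleR_conv_of_real)
  hence "(LINT x:{0<..}|lebesgue. f (c*x)) = (LINT x:{0<..}|lebesgue. f x) / of_real c"
    using c by (simp add: field_simps)
  also have "(LINT x:{0<..}|lebesgue. f x) = integral {0<..} f"
    by (rule set_lebesgue_integral_eq_integral(2)[OF f])
  finally show ?thesis using has_integral_set_lebesgue[OF si] by simp
qed

lemma gamma_scale:
  fixes z :: complex and lam :: real
  assumes z: "Re z > 0" and l: "lam > 0"
  shows "((\<lambda>t. of_real t powr (z - 1) * exp (- (of_real lam) * of_real t)) has_integral
           Gamma z / of_real lam powr z) {0<..}"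
proof -
  let ?f = "\<lambda>t. of_real t powr (z - 1) / of_real (exp t) :: complex"
  have fi: "?f absolutely_integrable_on {0<..}" by (rule absolutely_integrable_Gamma_integral'[OF z])
  have I: "integral {0<..} ?f = Gamma z" using Gamma_integral_complex'[OF z] by (rule integral_unique)
  have 1: "((\<lambda>x. ?f (lam * x)) has_integral (Gamma z / of_real lam)) {0<..}"
    using scale_integral[OF fi l] unfolding I .
  have 2: "((\<lambda>x. of_real lam powr (1 - z) * ?f (lam * x)) has_integral
             (of_real lam powr (1 - z) * (Gamma z / of_real lam))) {0<..}"
    by (rule has_integral_mult_right[OF 1])
  have l0: "(of_real lam :: complex) \<noteq> 0" using l by simp
  have p1: "(of_real lam :: complex) powr 1 = of_real lam"
    using powr_nat'[of "of_real lam" 1] l0 by simp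
  have 3: "of_real lam powr (1 - z) * (Gamma z / of_real lam) = Gamma z / of_real lam powr z"
    using l0 by (simp add: powr_diff p1 field_simps)
  have 4: "of_real lam powr (1 - z) * ?f (lam * t) = of_real t powr (z - 1) * exp (- of_real lam * of_real t)"
    if t: "t \<in> {0<..}" for t
  proof -
    have "(complex_of_real (lam * t)) powr (z - 1) = of_real lam powr (z - 1) * of_real t powr (z - 1)"
      using t l by (simp add: powr_times_real)
    moreover have "of_real lam powr (1 - z) * of_real lam powr (z - 1) = (1::complex)"
      using l0 by (simp add: powr_add[symmetric])
    moreover have "(1::complex) / of_real (exp (lam * t)) = exp (- of_real lam * of_real t)"
      by (simp add: exp_minus field_simps flip: exp_of_real)
    ultimately show ?thesis
      by (metis (no_types, lifting) mult.assoc mult.left_commute times_divide_eq_right mult_1_right mult.commute)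
  qed
  show ?thesis using 2 unfolding 3 by (rule has_integral_eq[rotated]) (use 4 in auto)
qed

lemma gamma_poch:
  fixes z :: complex
  assumes z: "Re z > 0"
  shows "Gamma (z + of_nat j) = pochhammer z j * Gamma z"
proof -
  have P: "pochhammer z j \<noteq> 0"
  proof
    assume "pochhammer z j = 0"
    then obtain k where "z = - of_nat k" by (auto simp: pochhammer_eq_0_iff)
    with z show False by simp
  qed
  have R: "rGamma (z + of_nat j) \<noteq> 0"
  proof
    assume "rGamma (z + of_nat j) = 0"
    then have "z + of_nat j \<in> \<int>\<^sub>\<le>\<^sub>0" by (simp add: rGamma_eq_zero_iff)
    then obtain k where "z + of_nat j = - of_nat k" by (auto elim!: nonpos_Ints_cases')
    hence "Re (z + of_nat j) = - of_nat k" by (metis Re_complex_of_real of_real_minus of_real_of_nat_eq)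
    with z show False by simp
  qed
  show ?thesis unfolding Gamma_def using pochhammer_rGamma[of z j] P R
    by (simp add: field_simps)
qed

lemma exp_partial_le:
  fixes x :: real
  assumes "x \<ge> 0"
  shows "(\<Sum>j<N. x^j / fact j) \<le> exp x"
proof -
  have s: "(\<lambda>n. x^n / fact n) sums exp x" using exp_converges[of x] by (simp add: divide_inverse_commute)
  have "(\<Sum>j<N. x^j / fact j) \<le> (\<Sum>n. x^n / fact n)"
    by (rule sum_le_suminf) (use s assms in \<open>auto simp: sums_iff\<close>)
  thus ?thesis using s by (simp add: sums_iff)
qed

lemma laplace_disc:
  fixes z \<mu> :: complex and lam :: real
  assumes z: "Re z > 0" and l: "lam > 0" and d: "cmod (\<mu> - of_real lam) < lam"
  shows "((\<lambda>t. of_real t powr (z - 1) * exp (- \<mu> * of_real t)) has_integral Gamma z / \<mu> powr z) {0<..}"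
proof -
  define \<delta> where "\<delta> = of_real lam - \<mu>"
  define r where "r = cmod \<delta>"
  have r: "r < lam" "r \<ge> 0" using d by (simp_all add: r_def \<delta>_def norm_minus_commute)
  define F where "F = (\<lambda>N t. \<Sum>j<N. of_real t powr (z - 1) * exp (- of_real lam * of_real t) * ((\<delta> * of_real t)^j / fact j))"
  define Y where "Y = (\<lambda>N. \<Sum>j<N. Gamma (z + of_nat j) / of_real lam powr (z + of_nat j) * (\<delta>^j / fact j))"
  define h where "h = (\<lambda>t::real. t powr (Re z - 1) / exp ((lam - r) * t))"
  have int: "(F N has_integral Y N) {0<..}" for N
    unfolding F_def Y_def
  proof (rule has_integral_sum[OF finite_lessThan])
    fix j assume "j \<in> {..<N}"
    have Rz: "Re (z + of_nat j) > 0" using z by simp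
    have g: "((\<lambda>t. of_real t powr (z + of_nat j - 1) * exp (- (of_real lam) * of_real t) * (\<delta>^j / fact j)) has_integral
           Gamma (z + of_nat j) / of_real lam powr (z + of_nat j) * (\<delta>^j / fact j)) {0<..}"
      by (rule has_integral_mult_left[OF gamma_scale[OF Rz l]])
    show "((\<lambda>t. of_real t powr (z - 1) * exp (- of_real lam * of_real t) * ((\<delta> * of_real t)^j / fact j)) has_integral
           Gamma (z + of_nat j) / of_real lam powr (z + of_nat j) * (\<delta>^j / fact j)) {0<..}"
    proof (rule has_integral_eq[OF _ g])
      fix t :: real assume t: "t \<in> {0<..}"
      have "of_real t powr (z + of_nat j - 1) = of_real t powr (z - 1) * (of_real t powr of_nat j :: complex)"
        by (simp add: powr_add[symmetric] algebra_simps)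
      also have "(of_real t powr of_nat j :: complex) = of_real t ^ j" using t by (simp add: powr_nat')
      finally show "of_real t powr (z + of_nat j - 1) * exp (- (of_real lam) * of_real t) * (\<delta>^j / fact j) =
          of_real t powr (z - 1) * exp (- of_real lam * of_real t) * ((\<delta> * of_real t)^j / fact j)"
        by (simp add: power_mult_distrib field_simps)
    qed
  qed
  have hint: "h integrable_on {0<..}"
  proof -
    have "(\<lambda>t. complex_of_real t powr (z - 1) / of_real (exp ((lam - r) * t))) absolutely_integrable_on {0<..}"
      by (rule absolutely_integrable_Gamma_integral[OF z]) (use r in simp)
    hence "(\<lambda>t. norm (complex_of_real t powr (z - 1) / of_real (exp ((lam - r) * t)))) integrable_on {0<..}"
      by (simp add: absolutely_integrable_on_def)
    thus ?thesis
      by (rule integrable_eq) (auto simp: h_def norm_divide norm_powr_real_powr)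
  qed
  have bound: "\<forall>t\<in>{0<..}. norm (F N t) \<le> h t" for N
  proof
    fix t :: real assume t: "t \<in> {0<..}"
    have "norm (F N t) \<le> (\<Sum>j<N. norm (of_real t powr (z - 1) * exp (- of_real lam * of_real t) * ((\<delta> * of_real t)^j / fact j)))"
      unfolding F_def by (rule norm_sum)
    also have "\<dots> = (\<Sum>j<N. t powr (Re z - 1) * exp (- lam * t) * ((r * t)^j / fact j))"
      using t by (intro sum.cong refl) (simp add: norm_mult norm_divide norm_powr_real_powr norm_power r_def norm_exp_eq_Re)
    also have "\<dots> = t powr (Re z - 1) * exp (- lam * t) * (\<Sum>j<N. (r * t)^j / fact j)"
      by (simp add: sum_distrib_left)
    also have "\<dots> \<le> t powr (Re z - 1) * exp (- lam * t) * exp (r * t)"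
      by (intro mult_left_mono exp_partial_le) (use t r in auto)
    also have "\<dots> = h t" unfolding h_def by (simp add: exp_minus exp_add[symmetric] field_simps exp_diff)
    finally show "norm (F N t) \<le> h t" .
  qed
  have lim: "\<forall>t\<in>{0<..}. (\<lambda>N. F N t) \<longlonglongrightarrow> of_real t powr (z - 1) * exp (- \<mu> * of_real t)"
  proof
    fix t :: real assume t: "t \<in> {0<..}"
    have s: "(\<lambda>j. (\<delta> * of_real t)^j / fact j) sums exp (\<delta> * of_real t)"
      using exp_converges[of "\<delta> * of_real t"] by (simp add: scaleR_conv_of_real divide_inverse_commute)
    have "(\<lambda>N. of_real t powr (z - 1) * exp (- of_real lam * of_real t) * (\<Sum>j<N. (\<delta> * of_real t)^j / fact j))
        \<longlonglongrightarrow> of_real t powr (z - 1) * exp (- of_real lam * of_real t) * exp (\<delta> * of_real t)"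
      by (intro tendsto_mult_left) (use s in \<open>simp add: sums_def\<close>)
    moreover have "exp (- of_real lam * of_real t) * exp (\<delta> * of_real t) = exp (- \<mu> * of_real t)"
      unfolding \<delta>_def by (simp add: exp_add[symmetric] algebra_simps)
    ultimately show "(\<lambda>N. F N t) \<longlonglongrightarrow> of_real t powr (z - 1) * exp (- \<mu> * of_real t)"
      unfolding F_def by (simp add: sum_distrib_left mult.assoc)
  qed
  have Ylim: "Y \<longlonglongrightarrow> Gamma z / \<mu> powr z"
  proof -
    define u where "u = - \<delta> / of_real lam"
    have l0: "(of_real lam :: complex) \<noteq> 0" using l by simp
    have u: "norm u < 1" using r l unfolding u_def r_def by (simp add: norm_divide)
    have s: "(\<lambda>j. (- z gchoose j) * u ^ j) sums (1 + u) powr (- z)" by (rule gen_binomial_complex[OF u])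
    have 1: "1 + u = \<mu> / of_real lam" unfolding u_def \<delta>_def using l0 by (simp add: field_simps)
    have 2: "\<mu> powr (- z) = of_real lam powr (- z) * (\<mu> / of_real lam) powr (- z)"
    proof -
      have "\<mu> = of_real lam * (\<mu> / of_real lam)" using l0 by simp
      hence "\<mu> powr (- z) = (of_real lam * (\<mu> / of_real lam)) powr (- z)" by simp
      also have "\<dots> = of_real lam powr (- z) * (\<mu> / of_real lam) powr (- z)"
        by (rule powr_times_real_left) (use l in auto)
      finally show ?thesis .
    qed
    have trm: "Gamma (z + of_nat j) / of_real lam powr (z + of_nat j) * (\<delta>^j / fact j)
        = Gamma z * of_real lam powr (- z) * ((- z gchoose j) * u ^ j)" for j
    proof -
      have m1: "(-1::complex)^j * (-1)^j = 1"
      proof -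
        have "(-1::complex)^j * (-1)^j = ((-1)*(-1))^j" by (rule power_mult_distrib[symmetric])
        thus ?thesis by simp
      qed
      have uj: "u ^ j = (-1)^j * (\<delta> / of_real lam)^j"
      proof -
        have "u = (-1) * (\<delta> / of_real lam)" by (simp add: u_def)
        thus ?thesis by (simp only: power_mult_distrib)
      qed
      have "(- z gchoose j) * u ^ j = ((-1)^j * (-1)^j) * (pochhammer z j / fact j * (\<delta> / of_real lam)^j)"
        unfolding uj gbinomial_pochhammer minus_minus by (simp only: mult_ac times_divide_eq_left times_divide_eq_right)
      hence G: "(- z gchoose j) * u ^ j = pochhammer z j * \<delta>^j / (fact j * of_real lam ^ j)"
        unfolding m1 by (simp add: power_divide)
      have P: "of_real lam powr (z + of_nat j) = of_real lam powr z * of_real lam ^ j"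
        using l0 by (simp add: powr_add powr_nat')
      have M: "of_real lam powr (- z) = 1 / of_real lam powr z" by (simp add: powr_minus_divide)
      have nz: "of_real lam powr z \<noteq> (0::complex)" using l0 by (simp add: powr_def)
      show ?thesis unfolding G P M gamma_poch[OF z] using l0 nz by (simp add: field_simps)
    qed
    have "(\<lambda>j. Gamma z * of_real lam powr (- z) * ((- z gchoose j) * u ^ j)) sums (Gamma z * of_real lam powr (- z) * (1 + u) powr (- z))"
      by (rule sums_mult[OF s])
    hence "(\<lambda>j. Gamma (z + of_nat j) / of_real lam powr (z + of_nat j) * (\<delta>^j / fact j)) sums (Gamma z / \<mu> powr z)"
      unfolding trm 1 using 2 by (simp add: powr_minus_divide field_simps)
    thus ?thesis unfolding Y_def sums_def .
  qed
  show ?thesis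
    by (rule has_integral_dominated_convergence[OF int hint bound lim Ylim])
qed



lemma laplace:
  fixes z \<mu> :: complex
  assumes z: "Re z > 0" and m: "Re \<mu> > 0"
  shows "((\<lambda>t. of_real t powr (z - 1) * exp (- \<mu> * of_real t)) has_integral Gamma z / \<mu> powr z) {0<..}"
proof -
  define lam where "lam = (cmod \<mu>)^2 / Re \<mu>"
  have n0: "cmod \<mu> > 0" using m by auto
  have l: "lam > 0" unfolding lam_def using m n0 by simp
  have "(cmod (\<mu> - of_real lam))^2 = (Re \<mu> - lam)^2 + (Im \<mu>)^2" by (simp add: cmod_power2)
  also have "\<dots> = lam^2 - (cmod \<mu>)^2"
  proof -
    have "lam * Re \<mu> = (cmod \<mu>)^2" unfolding lam_def using m by simp
    thus ?thesis by (simp add: cmod_power2 power2_diff algebra_simps)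
  qed
  also have "\<dots> < lam^2" using n0 by simp
  finally have "cmod (\<mu> - of_real lam) < lam"
    using l by (meson power_less_imp_less_base less_imp_le)
  from laplace_disc[OF z l this] show ?thesis .
qed

theorem mainTheorem20:
  fixes m k :: nat and \<beta> \<gamma> \<mu> :: complex
  assumes "m \<ge> 1" and "k \<ge> 1"
    and "\<beta> - of_nat k - 1 \<notin> \<int>\<^sub>\<le>\<^sub>0"
    and "\<beta> - \<gamma> - of_nat m - of_nat k \<notin> \<int>\<^sub>\<le>\<^sub>0"
    and "Re (- of_nat m - of_nat k - \<gamma>) > 0"
    and "Re \<mu> > 0"
  shows "((\<lambda>t::real. of_real t powr (- of_nat m - of_nat k - \<gamma> - 1) * exp (- \<mu> * of_real t)
            * hyp2F2_trunc (- of_nat m) (\<beta> - of_nat k - 1) (- of_nat m - of_nat k)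
                (\<beta> - \<gamma> - of_nat m - of_nat k) (\<mu> * of_real t) m)
          has_integral
          (Gamma (- of_nat m - of_nat k - \<gamma>) / \<mu> powr (- of_nat m - of_nat k - \<gamma>)
            * (pochhammer \<beta> m * pochhammer \<gamma> m)
              / (pochhammer (1 + of_nat k) m * pochhammer (1 + of_nat k + \<gamma> - \<beta>) m))) {0<..}"
proof -
  define s where "s = - of_nat m - of_nat k - \<gamma>"
  define cf where "cf = (\<lambda>n. (pochhammer (- of_nat m) n * pochhammer (\<beta> - of_nat k - 1) n) /
      (pochhammer (- of_nat m - of_nat k) n * pochhammer (\<beta> - \<gamma> - of_nat m - of_nat k) n))"
  have s: "Re s > 0" using assms(5) unfolding s_def .
  have mu0: "\<mu> \<noteq> 0" using assms(6) by auto
  have mupow: "\<mu> powr s \<noteq> 0" using mu0 by (simp add: powr_def)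
  have int1: "((\<lambda>t. (cf n * \<mu>^n / of_nat (fact n)) * (of_real t powr (s + of_nat n - 1) * exp (- \<mu> * of_real t)))
     has_integral ((cf n * \<mu>^n / of_nat (fact n)) * (Gamma (s + of_nat n) / \<mu> powr (s + of_nat n)))) {0<..}" for n
  proof -
    have Rs: "Re (s + of_nat n) > 0" using s by simp
    show ?thesis by (rule has_integral_mult_right[OF laplace[OF Rs assms(6)]])
  qed
  have int2: "((\<lambda>t. \<Sum>n\<le>m. (cf n * \<mu>^n / of_nat (fact n)) * (of_real t powr (s + of_nat n - 1) * exp (- \<mu> * of_real t)))
     has_integral (\<Sum>n\<le>m. (cf n * \<mu>^n / of_nat (fact n)) * (Gamma (s + of_nat n) / \<mu> powr (s + of_nat n)))) {0<..}"
    by (rule has_integral_sum[OF finite_atMost]) (rule int1)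
  have pt: "of_real t powr (s - 1) * exp (- \<mu> * of_real t)
            * hyp2F2_trunc (- of_nat m) (\<beta> - of_nat k - 1) (- of_nat m - of_nat k)
                (\<beta> - \<gamma> - of_nat m - of_nat k) (\<mu> * of_real t) m
       = (\<Sum>n\<le>m. (cf n * \<mu>^n / of_nat (fact n)) * (of_real t powr (s + of_nat n - 1) * exp (- \<mu> * of_real t)))"
    if t: "t \<in> {0<..}" for t :: real
  proof -
    have tp: "of_real t powr (s + of_nat n - 1) = of_real t powr (s - 1) * (of_real t ^ n :: complex)" for n
    proof -
      have "of_real t powr (s + of_nat n - 1) = of_real t powr (s - 1) * (of_real t powr of_nat n :: complex)"
        by (simp add: powr_add[symmetric] algebra_simps)
      also have "(of_real t powr of_nat n :: complex) = of_real t ^ n" using t by (simp add: powr_nat')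
      finally show ?thesis .
    qed
    show ?thesis unfolding hyp2F2_trunc_def tp cf_def
      by (simp add: sum_distrib_left power_mult_distrib mult_ac)
  qed
  have int3: "((\<lambda>t::real. of_real t powr (s - 1) * exp (- \<mu> * of_real t)
            * hyp2F2_trunc (- of_nat m) (\<beta> - of_nat k - 1) (- of_nat m - of_nat k)
                (\<beta> - \<gamma> - of_nat m - of_nat k) (\<mu> * of_real t) m)
     has_integral (\<Sum>n\<le>m. (cf n * \<mu>^n / of_nat (fact n)) * (Gamma (s + of_nat n) / \<mu> powr (s + of_nat n)))) {0<..}"
    by (rule has_integral_eq[OF _ int2]) (use pt in auto)
  have val: "(\<Sum>n\<le>m. (cf n * \<mu>^n / of_nat (fact n)) * (Gamma (s + of_nat n) / \<mu> powr (s + of_nat n)))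
      = Gamma s / \<mu> powr s * (\<Sum>n\<le>m. cf n * pochhammer s n / of_nat (fact n))"
  proof -
    have "(cf n * \<mu>^n / of_nat (fact n)) * (Gamma (s + of_nat n) / \<mu> powr (s + of_nat n))
        = Gamma s / \<mu> powr s * (cf n * pochhammer s n / of_nat (fact n))" for n
    proof -
      have "\<mu> powr (s + of_nat n) = \<mu> powr s * \<mu> ^ n" using mu0 by (simp add: powr_add powr_nat')
      thus ?thesis unfolding gamma_poch[OF s] using mu0 mupow by (simp add: field_simps)
    qed
    thus ?thesis by (simp add: sum_distrib_left)
  qed
  define a where "a = \<beta> - of_nat k - 1"
  define c where "c = - of_nat m - (of_nat k :: complex)"
  define e where "e = 1 + of_nat k + \<gamma> - \<beta>"
  have e: "e = c - a - s" unfolding e_def c_def a_def s_def by simp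
  have hc: "c + of_nat j \<noteq> 0" if "j < m" for j
  proof
    assume "c + of_nat j = 0"
    hence "(of_nat j :: complex) = of_nat (m + k)" unfolding c_def by (simp add: algebra_simps)
    hence "j = m + k" using of_nat_eq_iff by blast
    with that show False by simp
  qed
  have he: "e + of_nat j \<noteq> 0" if "j < m" for j
  proof
    assume "e + of_nat j = 0"
    hence "\<beta> - \<gamma> - of_nat m - of_nat k = - of_nat (m - 1 - j)"
      unfolding e_def using that by (simp add: of_nat_diff algebra_simps)
    with assms(4) show False by simp
  qed
  have sumeq: "(\<Sum>n\<le>m. cf n * pochhammer s n / of_nat (fact n)) = (\<Sum>n\<le>m. tt a s c e m n)"
  proof (rule sum.cong[OF refl])
    fix n
    have eq: "1 - of_nat m - e = \<beta> - \<gamma> - of_nat m - of_nat k" unfolding e_def by simp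
    show "cf n * pochhammer s n / of_nat (fact n) = tt a s c e m n"
      unfolding cf_def tt_def a_def c_def eq by (simp add: divide_divide_eq_left times_divide_eq_left mult_ac)
  qed
  have saal': "(\<Sum>n\<le>m. tt a s c e m n) = pochhammer (c - a) m * pochhammer (c - s) m / (pochhammer c m * pochhammer e m)"
    by (rule saal[OF e hc he order_refl])
  have p1: "pochhammer (c - a) m = (-1)^m * pochhammer \<beta> m"
  proof -
    have ca: "c - a = - (\<beta> + of_nat m - 1)" unfolding c_def a_def by simp
    have "pochhammer (c - a) m = (-1)^m * pochhammer (\<beta> + of_nat m - 1 - of_nat m + 1) m"
      unfolding ca by (rule pochhammer_minus)
    thus ?thesis by simp
  qed
  have p2: "pochhammer c m = (-1)^m * pochhammer (1 + of_nat k) m"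
  proof -
    have cc: "c = - (of_nat (m + k))" unfolding c_def by simp
    have "pochhammer c m = (-1)^m * pochhammer (of_nat (m + k) - of_nat m + 1) m"
      unfolding cc by (rule pochhammer_minus)
    thus ?thesis by (simp add: add.commute)
  qed
  have p3: "c - s = \<gamma>" unfolding c_def s_def by simp
  have m1: "(-1::complex)^m \<noteq> 0" by simp
  have final: "pochhammer (c - a) m * pochhammer (c - s) m / (pochhammer c m * pochhammer e m)
     = (pochhammer \<beta> m * pochhammer \<gamma> m) / (pochhammer (1 + of_nat k) m * pochhammer (1 + of_nat k + \<gamma> - \<beta>) m)"
    unfolding p1 p2 p3 e_def using m1 by (simp add: mult.assoc)
  show ?thesis using int3 unfolding val sumeq saal' final s_def[symmetric]
    by (simp add: mult.assoc)
qed

end
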